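(* Let $R\in(-1,1)^{M+1}$, $T_n=\sqrt{1-R_n^2}$, and let $\mathsf{p}\in\mathsf{S}_M$ with $(k,b)=(\kappa(\mathsf{p}),\beta(\mathsf{p}))$. Then $$w(\mathsf{p})=(-R)^{\tilde k-b}R^{k-b}T^{2b}.$$
   Context: Scattering sequences: $\mathsf{S}_M$ ($M\ge1$) is the set of integer sequences $\mathsf{p}=(i_0,\ldots,i_L)$ with $L\ge2$, $i_0=i_L=-1$, $i_j\in\{0,\ldots,M\}$ for $1\le j\le L-1$, and $|i_{j+1}-i_j|=1$ for all $j$. $\kappa(\mathsf{p})=(k_0,\ldots,k_M)$: $k_n$ is the number of maximal blocks of consecutive indices $j\in\{0,\ldots,L\}$ with $i_j\ge n$; $\beta(\mathsf{p})=(b_0,\ldots,b_M)$: $b_n$ is the number of those blocks containing at least two indices. Weight: for $1\le j\le L-1$ with $i_j=m$, set $w_j=R_m$ if $i_{j-1}=i_{j+1}=m-1$; $w_j=-R_m$ if $i_{j-1}=i_{j+1}=m+1$; $w_j=\sqrt{1-R_m^2}$ otherwise; $w(\mathsf{p})=\prod_{j=1}^{L-1}w_j$. $\tilde k=(k_1,\ldots,k_M,0)$. Multi-index powers: $S^d=\prod_{n=0}^M S_n^{d_n}$. *)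

theory Defs
  imports Complex_Main
begin

text \<open>A sequence p = (i_0,...,i_L) is an int list of length L+1; L = length p - 1.\<close>

definition scat_seq :: "nat \<Rightarrow> int list \<Rightarrow> bool" where
  "scat_seq M p \<longleftrightarrow> (let L = length p - 1 in
     length p \<ge> 3 \<and> p ! 0 = -1 \<and> p ! L = -1 \<and>
     (\<forall>j. 1 \<le> j \<and> j \<le> L - 1 \<longrightarrow> 0 \<le> p ! j \<and> p ! j \<le> int M) \<and>
     (\<forall>j<L. \<bar>p ! (Suc j) - p ! j\<bar> = 1))"

definition blocks :: "int list \<Rightarrow> nat \<Rightarrow> (nat \<times> nat) set" where
  "blocks p n = {(a, b). a \<le> b \<and> b \<le> length p - 1 \<and>
      (\<forall>j. a \<le> j \<and> j \<le> b \<longrightarrow> p ! j \<ge> int n) \<and>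
      (a = 0 \<or> p ! (a - 1) < int n) \<and>
      (b = length p - 1 \<or> p ! (Suc b) < int n)}"

definition kappa :: "int list \<Rightarrow> nat \<Rightarrow> nat" where
  "kappa p n = card (blocks p n)"

definition beta :: "int list \<Rightarrow> nat \<Rightarrow> nat" where
  "beta p n = card {(a, b) \<in> blocks p n. a < b}"

definition kappa_tilde :: "nat \<Rightarrow> int list \<Rightarrow> nat \<Rightarrow> nat" where
  "kappa_tilde M p n = (if n < M then kappa p (Suc n) else 0)"

definition wj :: "(nat \<Rightarrow> real) \<Rightarrow> int list \<Rightarrow> nat \<Rightarrow> real" where
  "wj R p j = (let m = p ! j in
     if p ! (j - 1) = m - 1 \<and> p ! (Suc j) = m - 1 then R (nat m)
     else if p ! (j - 1) = m + 1 \<and> p ! (Suc j) = m + 1 then - R (nat m)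
     else sqrt (1 - (R (nat m))\<^sup>2))"

definition weight :: "(nat \<Rightarrow> real) \<Rightarrow> int list \<Rightarrow> real" where
  "weight R p = (\<Prod>j\<in>{1..length p - 2}. wj R p j)"

end

theory Submission imports Defs begin


locale sq =
  fixes M :: nat and p :: "int list"
  assumes sc: "scat_seq M p"
begin

definition L where "L = length p - 1"

lemma L2: "L \<ge> 2" using sc unfolding scat_seq_def L_def Let_def by auto
lemma p0: "p!0 = -1" using sc unfolding scat_seq_def L_def Let_def by auto
lemma pL: "p!L = -1" using sc unfolding scat_seq_def L_def Let_def by auto
lemma pint: "1 \<le> j \<Longrightarrow> j \<le> L - 1 \<Longrightarrow> 0 \<le> p!j \<and> p!j \<le> int M"
  using sc unfolding scat_seq_def L_def Let_def by auto
lemma pstep: "j < L \<Longrightarrow> \<bar>p!(Suc j) - p!j\<bar> = 1"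
  using sc unfolding scat_seq_def L_def Let_def by auto
lemma len2: "length p - 2 = L - 1" unfolding L_def by simp

definition up :: "nat \<Rightarrow> nat set" where
  "up n = {j. 1 \<le> j \<and> j \<le> L - 1 \<and> p!(j-1) = int n - 1 \<and> p!j = int n}"

lemma blocks_mem:
  assumes "(a,b) \<in> blocks p n"
  shows "a \<in> up n" "a \<le> b" "b \<le> L" "\<And>j. a \<le> j \<Longrightarrow> j \<le> b \<Longrightarrow> p!j \<ge> int n"
    "b = L \<or> p!(Suc b) < int n"
proof -
  have A: "a \<le> b" "b \<le> L" "\<And>j. a \<le> j \<Longrightarrow> j \<le> b \<Longrightarrow> p!j \<ge> int n"
    "a = 0 \<or> p!(a-1) < int n" "b = L \<or> p!(Suc b) < int n"
    using assms unfolding blocks_def L_def by auto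
  then show "a \<le> b" "b \<le> L" "\<And>j. a \<le> j \<Longrightarrow> j \<le> b \<Longrightarrow> p!j \<ge> int n"
    "b = L \<or> p!(Suc b) < int n" by auto
  have pa: "p!a \<ge> int n" using A by auto
  have a0: "a \<noteq> 0"
  proof
    assume "a = 0" then have "p!0 \<ge> int n" using pa by simp
    then show False using p0 by simp
  qed
  have aL: "a \<noteq> L" using pa pL by auto
  have st: "\<bar>p!a - p!(a-1)\<bar> = 1" using pstep[of "a-1"] a0 A by auto
  have "p!(a-1) < int n" using A a0 by auto
  then have "p!(a-1) = int n - 1" "p!a = int n" using st pa by auto
  then show "a \<in> up n" unfolding up_def using a0 aL A by auto
qed

lemma blocks_inj: "inj_on fst (blocks p n)"
proof (rule inj_onI)
  fix x y assume x: "x \<in> blocks p n" and y: "y \<in> blocks p n" and e: "fst x = fst y"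
  obtain a b where xa: "x = (a,b)" by (cases x)
  obtain b' where ya: "y = (a,b')" using e xa by (cases y) auto
  have X: "a \<le> b" "b \<le> L" "\<And>j. a \<le> j \<Longrightarrow> j \<le> b \<Longrightarrow> p!j \<ge> int n" "b = L \<or> p!(Suc b) < int n"
    using blocks_mem[of a b n] x xa by auto
  have Y: "a \<le> b'" "b' \<le> L" "\<And>j. a \<le> j \<Longrightarrow> j \<le> b' \<Longrightarrow> p!j \<ge> int n" "b' = L \<or> p!(Suc b') < int n"
    using blocks_mem[of a b' n] y ya by auto
  have "b = b'"
  proof (rule linorder_cases[of b b'])
    assume "b < b'" then show ?thesis using X(1,4) Y(2) Y(3)[of "Suc b"] by fastforce
  next
    assume "b' < b" then show ?thesis using Y(1,4) X(2) X(3)[of "Suc b'"] by fastforce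
  qed
  then show "x = y" using xa ya by simp
qed

lemma blocks_surj: "fst ` blocks p n = up n"
proof
  show "fst ` blocks p n \<subseteq> up n" using blocks_mem by auto
next
  show "up n \<subseteq> fst ` blocks p n"
  proof
    fix a assume a: "a \<in> up n"
    then have aL: "a \<le> L" and a1: "1 \<le> a" and pa1: "p!(a-1) = int n - 1" and pa: "p!a = int n"
      unfolding up_def by auto
    define Q where "Q j \<longleftrightarrow> a \<le> j \<and> (j = L \<or> p!(Suc j) < int n)" for j
    define b where "b = (LEAST j. Q j)"
    have QL: "Q L" using aL Q_def by auto
    have Qb: "Q b" unfolding b_def by (rule LeastI[of Q, OF QL])
    have bL: "b \<le> L" unfolding b_def by (rule Least_le[of Q L, OF QL])
    have nq: "\<And>j. j < b \<Longrightarrow> \<not> Q j" unfolding b_def by (rule not_less_Least)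
    have ind: "\<forall>j. a + d \<le> b \<longrightarrow> p!(a+d) \<ge> int n" for d
    proof (induction d)
      case 0 then show ?case using pa by simp
    next
      case (Suc d)
      show ?case
      proof (intro allI impI)
        fix j assume h: "a + Suc d \<le> b"
        have "\<not> Q (a+d)" using nq h by simp
        then show "p!(a + Suc d) \<ge> int n" using h by (simp add: Q_def)
      qed
    qed
    have all: "\<And>j. a \<le> j \<Longrightarrow> j \<le> b \<Longrightarrow> p!j \<ge> int n"
    proof -
      fix j assume "a \<le> j" "j \<le> b"
      then obtain d where "j = a + d" using le_Suc_ex by blast
      then show "p!j \<ge> int n" using ind[of d] \<open>j \<le> b\<close> by auto
    qed
    have "(a,b) \<in> blocks p n"
      unfolding blocks_def using Qb bL all pa1 a1 unfolding Q_def L_def by auto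
    then show "a \<in> fst ` blocks p n" by force
  qed
qed

lemma kappa_up: "kappa p n = card (up n)"
  unfolding kappa_def using card_image[OF blocks_inj] blocks_surj by simp

lemma beta_up: "beta p n = card {j \<in> up n. p!(Suc j) = int n + 1}"
proof -
  let ?B = "{(a, b) \<in> blocks p n. a < b}"
  have inj: "inj_on fst ?B" using blocks_inj by (rule inj_on_subset) auto
  have "fst ` ?B = {j \<in> up n. p!(Suc j) = int n + 1}"
  proof (intro equalityI subsetI)
    fix x assume "x \<in> fst ` ?B"
    then obtain a b where ab: "(a,b) \<in> blocks p n" "a < b" "x = a" by auto
    note m = blocks_mem[OF ab(1)]
    have "p!a = int n" using m(1) unfolding up_def by auto
    moreover have "p!(Suc a) \<ge> int n" using m(4)[of "Suc a"] ab by auto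
    moreover have "\<bar>p!(Suc a) - p!a\<bar> = 1" using pstep[of a] ab m by auto
    ultimately show "x \<in> {j \<in> up n. p!(Suc j) = int n + 1}" using m(1) ab by auto
  next
    fix a assume a: "a \<in> {j \<in> up n. p!(Suc j) = int n + 1}"
    then obtain ab where ab: "ab \<in> blocks p n" "fst ab = a" using blocks_surj by force
    obtain b where abe: "ab = (a,b)" using ab by (cases ab) auto
    note m = blocks_mem[of a b n]
    have pa: "p!a = int n" using a unfolding up_def by auto
    have "a < b"
    proof (rule ccontr)
      assume "\<not> a < b"
      then have "a = b" using m ab abe by auto
      then show False using m(5) ab abe pL pa a by auto
    qed
    then show "a \<in> fst ` ?B" using ab abe by force
  qed
  then show ?thesis unfolding beta_def using card_image[OF inj] by simp
qed

end


lemma card_lessSuc: "card {s. s < Suc t \<and> Q s} = card {s. s < t \<and> Q s} + (if Q t then 1 else 0)"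
proof -
  have "{s. s < Suc t \<and> Q s} = (if Q t then insert t {s. s < t \<and> Q s} else {s. s < t \<and> Q s})"
    by (auto simp: less_Suc_eq)
  then show ?thesis by simp
qed

lemma balance:
  fixes f :: "nat \<Rightarrow> int"
  assumes "\<forall>s<t. \<bar>f (Suc s) - f s\<bar> = 1"
  shows "int (card {s. s<t \<and> f s = c \<and> f (Suc s) = c+1}) - int (card {s. s<t \<and> f s = c+1 \<and> f (Suc s) = c})
     = (if f t \<ge> c+1 then 1 else 0) - (if f 0 \<ge> c+1 then 1 else 0)"
  using assms
proof (induction t)
  case 0 then show ?case by simp
next
  case (Suc t)
  have IH: "int (card {s. s<t \<and> f s = c \<and> f (Suc s) = c+1}) - int (card {s. s<t \<and> f s = c+1 \<and> f (Suc s) = c})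
     = (if f t \<ge> c+1 then 1 else 0) - (if f 0 \<ge> c+1 then 1 else 0)" using Suc by auto
  have st: "\<bar>f (Suc t) - f t\<bar> = 1" using Suc.prems by auto
  show ?case
    unfolding card_lessSuc[of t "\<lambda>s. f s = c \<and> f (Suc s) = c+1"] card_lessSuc[of t "\<lambda>s. f s = c+1 \<and> f (Suc s) = c"]
    using IH st by (cases "f (Suc t) = f t + 1") (simp_all add: abs_if split: if_split_asm)
qed

context sq begin

definition tri :: "int \<Rightarrow> int \<Rightarrow> int \<Rightarrow> nat set" where
  "tri x y z = {j. 1 \<le> j \<and> j \<le> L - 1 \<and> p!(j-1) = x \<and> p!j = y \<and> p!(Suc j) = z}"

lemma fin_tri: "finite (tri x y z)" unfolding tri_def by (rule finite_subset[of _ "{..L}"]) auto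

lemma up_split: "up n = tri (int n - 1) (int n) (int n - 1) \<union> tri (int n - 1) (int n) (int n + 1)"
proof (intro equalityI subsetI)
  fix j assume j: "j \<in> up n"
  then have "j < L" using L2 unfolding up_def by auto
  then have "\<bar>p!(Suc j) - p!j\<bar> = 1" by (rule pstep)
  then show "j \<in> tri (int n - 1) (int n) (int n - 1) \<union> tri (int n - 1) (int n) (int n + 1)"
    using j unfolding up_def tri_def by auto
qed (auto simp: up_def tri_def)

lemma kappa_PU: "kappa p n = card (tri (int n - 1) (int n) (int n - 1)) + card (tri (int n - 1) (int n) (int n + 1))"
  unfolding kappa_up up_split by (rule card_Un_disjoint) (auto simp: fin_tri tri_def)

lemma beta_U: "beta p n = card (tri (int n - 1) (int n) (int n + 1))"
proof -
  have "{j \<in> up n. p!(Suc j) = int n + 1} = tri (int n - 1) (int n) (int n + 1)"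
    unfolding up_split by (auto simp: tri_def)
  then show ?thesis using beta_up by simp
qed

lemma kappa_UV: "kappa p (Suc n) = card (tri (int n - 1) (int n) (int n + 1)) + card (tri (int n + 1) (int n) (int n + 1))"
proof -
  have "up (Suc n) = Suc ` (tri (int n - 1) (int n) (int n + 1) \<union> tri (int n + 1) (int n) (int n + 1))"
  proof (intro equalityI subsetI)
    fix j assume j: "j \<in> up (Suc n)"
    then have j1: "1 \<le> j" "j \<le> L - 1" "p!(j-1) = int n" "p!j = int n + 1" unfolding up_def by auto
    have "j - 1 \<noteq> 0"
    proof
      assume "j - 1 = 0" then have "p!0 = int n" using j1 by simp
      then show False using p0 by simp
    qed
    then have j2: "j \<ge> 2" by auto
    have "\<bar>p!(Suc (j-2)) - p!(j-2)\<bar> = 1" using pstep[of "j-2"] j1 j2 by auto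
    moreover have "Suc (j-2) = j - 1" using j2 by auto
    ultimately have "p!(j-2) = int n - 1 \<or> p!(j-2) = int n + 1" using j1 by auto
    moreover have "j - 1 - 1 = j - 2" by simp
    moreover have "Suc (j-1) = j" using j2 by simp
    ultimately have "j - 1 \<in> tri (int n - 1) (int n) (int n + 1) \<union> tri (int n + 1) (int n) (int n + 1)"
      unfolding tri_def using j1 j2 by auto
    moreover have "j = Suc (j-1)" using j2 by simp
    ultimately show "j \<in> Suc ` (tri (int n - 1) (int n) (int n + 1) \<union> tri (int n + 1) (int n) (int n + 1))" by blast
  next
    fix j assume "j \<in> Suc ` (tri (int n - 1) (int n) (int n + 1) \<union> tri (int n + 1) (int n) (int n + 1))"
    then obtain s where s: "j = Suc s" "s \<in> tri (int n - 1) (int n) (int n + 1) \<union> tri (int n + 1) (int n) (int n + 1)" by auto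
    then have s1: "1 \<le> s" "s \<le> L - 1" "p!s = int n" "p!(Suc s) = int n + 1" unfolding tri_def by auto
    have "Suc s \<noteq> L" using s1 pL by auto
    then show "j \<in> up (Suc n)" using s s1 L2 unfolding up_def by auto
  qed
  then have "kappa p (Suc n) = card (tri (int n - 1) (int n) (int n + 1) \<union> tri (int n + 1) (int n) (int n + 1))"
    unfolding kappa_up by (simp add: card_image)
  also have "\<dots> = card (tri (int n - 1) (int n) (int n + 1)) + card (tri (int n + 1) (int n) (int n + 1))"
    by (rule card_Un_disjoint) (auto simp: fin_tri tri_def)
  finally show ?thesis .
qed

lemma D_eq_U: "card (tri (int n + 1) (int n) (int n - 1)) = card (tri (int n - 1) (int n) (int n + 1))"
proof -
  let ?c = "int n - 1"
  have bal: "int (card {s. s<L \<and> p!s = ?c \<and> p!(Suc s) = ?c+1}) - int (card {s. s<L \<and> p!s = ?c+1 \<and> p!(Suc s) = ?c})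
     = (if p!L \<ge> ?c+1 then 1 else 0) - (if p!0 \<ge> ?c+1 then 1 else 0)"
    by (rule balance) (simp add: pstep)
  then have eq: "card {s. s<L \<and> p!s = ?c \<and> p!(Suc s) = ?c+1} = card {s. s<L \<and> p!s = ?c+1 \<and> p!(Suc s) = ?c}"
    using p0 pL by simp
  have e1: "Suc ` {s. s<L \<and> p!s = ?c \<and> p!(Suc s) = ?c+1} = up n"
  proof (intro equalityI subsetI)
    fix j assume "j \<in> Suc ` {s. s<L \<and> p!s = ?c \<and> p!(Suc s) = ?c+1}"
    then obtain s where s: "j = Suc s" "s < L" "p!s = ?c" "p!(Suc s) = int n" by auto
    have "Suc s \<noteq> L" using s pL by auto
    then show "j \<in> up n" using s unfolding up_def by auto
  next
    fix j assume j: "j \<in> up n"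
    then have "j = Suc (j-1)" "j - 1 < L" unfolding up_def by auto
    then show "j \<in> Suc ` {s. s<L \<and> p!s = ?c \<and> p!(Suc s) = ?c+1}" using j unfolding up_def
      by (intro image_eqI[of j Suc "j-1"]) auto
  qed
  have e2: "{s. s<L \<and> p!s = ?c+1 \<and> p!(Suc s) = ?c} = tri (int n - 1) (int n) (int n - 1) \<union> tri (int n + 1) (int n) (int n - 1)"
  proof (intro equalityI subsetI)
    fix s assume s: "s \<in> {s. s<L \<and> p!s = ?c+1 \<and> p!(Suc s) = ?c}"
    have "s \<noteq> 0"
    proof
      assume "s = 0" then have "p!0 = int n" using s by simp
      then show False using p0 by simp
    qed
    then have "\<bar>p!(Suc (s-1)) - p!(s-1)\<bar> = 1" using pstep[of "s-1"] s by auto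
    moreover have "Suc (s-1) = s" using \<open>s \<noteq> 0\<close> by simp
    ultimately show "s \<in> tri (int n - 1) (int n) (int n - 1) \<union> tri (int n + 1) (int n) (int n - 1)"
      using s \<open>s \<noteq> 0\<close> unfolding tri_def by auto
  qed (auto simp: tri_def)
  have "card (up n) = card {s. s<L \<and> p!s = ?c+1 \<and> p!(Suc s) = ?c}"
    using eq e1 card_image[of Suc "{s. s<L \<and> p!s = ?c \<and> p!(Suc s) = ?c+1}"] by simp
  also have "\<dots> = card (tri (int n - 1) (int n) (int n - 1)) + card (tri (int n + 1) (int n) (int n - 1))"
    unfolding e2 by (rule card_Un_disjoint) (auto simp: fin_tri tri_def)
  finally show ?thesis using kappa_PU[of n] kappa_up[of n] by simp
qed

end


context sq begin

lemma wj_tri: "j \<in> tri x y z \<Longrightarrow> wj R p j = (if x = y-1 \<and> z = y-1 then R (nat y)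
   else if x = y+1 \<and> z = y+1 then - R (nat y) else sqrt (1 - (R (nat y))\<^sup>2))"
  unfolding wj_def tri_def Let_def by auto

lemma prod_tri: "(\<Prod>j\<in>tri x y z. wj R p j) = (if x = y-1 \<and> z = y-1 then R (nat y)
   else if x = y+1 \<and> z = y+1 then - R (nat y) else sqrt (1 - (R (nat y))\<^sup>2)) ^ card (tri x y z)"
proof -
  have "(\<Prod>j\<in>tri x y z. wj R p j) = (\<Prod>j\<in>tri x y z. (if x = y-1 \<and> z = y-1 then R (nat y)
   else if x = y+1 \<and> z = y+1 then - R (nat y) else sqrt (1 - (R (nat y))\<^sup>2)))"
    by (rule prod.cong[OF refl]) (rule wj_tri)
  then show ?thesis by simp
qed

lemma level_prod:
  fixes R :: "nat \<Rightarrow> real" and n :: nat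
  defines "c \<equiv> int n"
  shows "(\<Prod>j\<in>{j\<in>{1..L-1}. nat (p!j) = n}. wj R p j) =
    R n ^ card (tri (c-1) c (c-1)) * (- R n) ^ card (tri (c+1) c (c+1))
    * sqrt (1 - (R n)\<^sup>2) ^ card (tri (c-1) c (c+1)) * sqrt (1 - (R n)\<^sup>2) ^ card (tri (c+1) c (c-1))"
proof -
  let ?P = "tri (c-1) c (c-1)" and ?V = "tri (c+1) c (c+1)" and ?U = "tri (c-1) c (c+1)" and ?D = "tri (c+1) c (c-1)"
  have seq: "{j\<in>{1..L-1}. nat (p!j) = n} = ((?P \<union> ?V) \<union> ?U) \<union> ?D"
  proof (intro equalityI subsetI)
    fix j assume j: "j \<in> {j\<in>{1..L-1}. nat (p!j) = n}"
    then have j1: "1 \<le> j" "j \<le> L - 1" by auto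
    have "0 \<le> p!j" using pint j1 by auto
    then have pj: "p!j = c" using j c_def by auto
    have a: "\<bar>p!(Suc j) - p!j\<bar> = 1" using pstep[of j] j1 L2 by auto
    have "\<bar>p!(Suc (j-1)) - p!(j-1)\<bar> = 1" using pstep[of "j-1"] j1 L2 by auto
    then have b: "\<bar>p!j - p!(j-1)\<bar> = 1" using j1 by simp
    show "j \<in> ((?P \<union> ?V) \<union> ?U) \<union> ?D" using a b pj j1 unfolding tri_def by auto
  qed (auto simp: tri_def c_def)
  have "(\<Prod>j\<in>((?P \<union> ?V) \<union> ?U) \<union> ?D. wj R p j)
      = (\<Prod>j\<in>?P. wj R p j) * (\<Prod>j\<in>?V. wj R p j) * (\<Prod>j\<in>?U. wj R p j) * (\<Prod>j\<in>?D. wj R p j)"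
    apply (subst prod.union_disjoint)
       apply (simp_all add: fin_tri)
      apply (auto simp: tri_def)[1]
     apply (subst prod.union_disjoint)
        apply (simp_all add: fin_tri)
      apply (auto simp: tri_def)[1]
    apply (subst prod.union_disjoint)
        apply (simp_all add: fin_tri)
    apply (auto simp: tri_def)[1]
    done
  also have "\<dots> = R n ^ card ?P * (- R n) ^ card ?V * sqrt (1 - (R n)\<^sup>2) ^ card ?U * sqrt (1 - (R n)\<^sup>2) ^ card ?D"
    unfolding prod_tri by (simp add: c_def)
  finally show ?thesis using seq by simp
qed

lemma top_empty: "tri x (int M) (int M + 1) = {}"
proof -
  { fix j assume j: "j \<in> tri x (int M) (int M + 1)"
    then have j1: "1 \<le> j" "j \<le> L - 1" "p!(Suc j) = int M + 1" unfolding tri_def by auto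
    have False
    proof (cases "Suc j = L")
      case True then show ?thesis using pL j1 by simp
    next
      case False
      then have "Suc j \<le> L - 1" using j1(2) L2 by arith
      then show ?thesis using pint[of "Suc j"] j1 by auto
    qed }
  then show ?thesis by auto
qed

lemma top_empty2: "tri (int M + 1) (int M) z = {}"
proof -
  { fix j assume j: "j \<in> tri (int M + 1) (int M) z"
    then have j1: "1 \<le> j" "j \<le> L - 1" "p!(j-1) = int M + 1" unfolding tri_def by auto
    have False
    proof (cases "j - 1 = 0")
      case True then show ?thesis using p0 j1 by simp
    next
      case False
      then have "1 \<le> j - 1" "j - 1 \<le> L - 1" using j1(2) L2 by arith+
      then show ?thesis using pint[of "j-1"] j1 by auto
    qed }
  then show ?thesis by auto
qed

end

theorem lemma6p2:
  fixes M :: nat and R :: "nat \<Rightarrow> real" and p :: "int list"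
  assumes "M \<ge> 1"
    and "\<forall>n\<le>M. -1 < R n \<and> R n < 1"
    and "scat_seq M p"
  shows "weight R p =
    (\<Prod>n\<le>M. (- R n) powi (int (kappa_tilde M p n) - int (beta p n))
           * (R n) powi (int (kappa p n) - int (beta p n))
           * (sqrt (1 - (R n)\<^sup>2)) ^ (2 * beta p n))"
proof -
  interpret sq M p by standard (rule assms(3))
  have "weight R p = (\<Prod>j\<in>{1..L-1}. wj R p j)" unfolding weight_def len2 ..
  also have "\<dots> = (\<Prod>n\<in>{..M}. \<Prod>j\<in>{j\<in>{1..L-1}. nat (p!j) = n}. wj R p j)"
  proof (rule prod.group[symmetric])
    show "(\<lambda>j. nat (p!j)) ` {1..L-1} \<subseteq> {..M}"
    proof
      fix x assume "x \<in> (\<lambda>j. nat (p!j)) ` {1..L-1}"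
      then obtain j where "j \<in> {1..L-1}" "x = nat (p!j)" by auto
      then show "x \<in> {..M}" using pint[of j] by auto
    qed
  qed auto
  also have "\<dots> = (\<Prod>n\<le>M. (- R n) powi (int (kappa_tilde M p n) - int (beta p n))
           * (R n) powi (int (kappa p n) - int (beta p n))
           * (sqrt (1 - (R n)\<^sup>2)) ^ (2 * beta p n))"
  proof (rule prod.cong[OF refl])
    fix n assume n: "n \<in> {..M}"
    let ?c = "int n"
    let ?P = "tri (?c-1) ?c (?c-1)" and ?V = "tri (?c+1) ?c (?c+1)" and ?U = "tri (?c-1) ?c (?c+1)" and ?D = "tri (?c+1) ?c (?c-1)"
    have k: "kappa p n = card ?P + card ?U" by (rule kappa_PU)
    have b: "beta p n = card ?U" by (rule beta_U)
    have d: "card ?D = card ?U" by (rule D_eq_U)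
    have kt: "kappa_tilde M p n = card ?U + card ?V"
    proof (cases "n < M")
      case True then show ?thesis unfolding kappa_tilde_def using kappa_UV[of n] by simp
    next
      case False then have "n = M" using n by auto
      then show ?thesis unfolding kappa_tilde_def using top_empty top_empty2 by simp
    qed
    have e1: "int (kappa_tilde M p n) - int (beta p n) = int (card ?V)" using kt b by simp
    have e2: "int (kappa p n) - int (beta p n) = int (card ?P)" using k b by simp
    show "(\<Prod>j\<in>{j\<in>{1..L-1}. nat (p!j) = n}. wj R p j) = (- R n) powi (int (kappa_tilde M p n) - int (beta p n))
           * (R n) powi (int (kappa p n) - int (beta p n))
           * (sqrt (1 - (R n)\<^sup>2)) ^ (2 * beta p n)"
    proof -
      have f1: "(- R n) powi (int (kappa_tilde M p n) - int (beta p n)) = (- R n) ^ card ?V"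
        unfolding e1 by simp
      have f2: "(R n) powi (int (kappa p n) - int (beta p n)) = (R n) ^ card ?P"
        unfolding e2 by simp
      have f3: "(sqrt (1 - (R n)\<^sup>2)) ^ (2 * beta p n) = sqrt (1 - (R n)\<^sup>2) ^ card ?U * sqrt (1 - (R n)\<^sup>2) ^ card ?D"
        unfolding b d mult_2 power_add ..
      show ?thesis unfolding f1 f2 f3 level_prod by (simp add: mult_ac)
    qed
  qed
  finally show ?thesis .
qed

end
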